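(* Let $\Sigma_1,\Sigma_2$ be alphabets with $\Sigma_1\subset\Sigma_2$. If $\varphi_1:\Sigma_1^+\to\Sigma_1^+$ is a reducible Parikh-positive morphism, then there exists a reducible Parikh-positive morphism $\varphi_2:\Sigma_2^+\to\Sigma_2^+$ such that $\varphi_2(a_i)=\varphi_1(a_i)$ for all $a_i\in\Sigma_1$ and $\varphi_2(a_j)=a_j$ for all $a_j\in\Sigma_2\setminus\Sigma_1$.
   Context: A morphism $\varphi:\Sigma^+\to\Sigma^+$ with $\Sigma=\{a_1,\dots,a_n\}$ satisfies $\varphi(uv)=\varphi(u)\varphi(v)$ (non-empty images); it is Parikh-positive if every letter of $\Sigma$ occurs in $\varphi(a_1)\cdots\varphi(a_n)$. An automorphism is an injective morphism mapping each letter to a single letter. A morphism $\varphi:\Sigma^+\to\Sigma^+$ is reducible if it equals $\psi_2\circ\psi_1$ for morphisms $\psi_1,\psi_2:\Sigma^+\to\Sigma^+$ neither of which is an automorphism. *)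

theory Defs
  imports Main
begin

text \<open>A morphism S^+ -> S^+ is determined by its images of the letters; we represent it by the
letter map f :: 'a => 'a list and extend it homomorphically by ext_morph.\<close>

definition words :: "'a set \<Rightarrow> 'a list set" where
  "words S = {w. w \<noteq> [] \<and> set w \<subseteq> S}"

definition ext_morph :: "('a \<Rightarrow> 'a list) \<Rightarrow> 'a list \<Rightarrow> 'a list" where
  "ext_morph f w = concat (map f w)"

definition is_morphism :: "'a set \<Rightarrow> ('a \<Rightarrow> 'a list) \<Rightarrow> bool" where
  "is_morphism S f \<longleftrightarrow> (\<forall>a\<in>S. f a \<in> words S)"

definition parikh_positive :: "'a set \<Rightarrow> ('a \<Rightarrow> 'a list) \<Rightarrow> bool" where
  "parikh_positive S f \<longleftrightarrow> (\<forall>b\<in>S. \<exists>a\<in>S. b \<in> set (f a))"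

definition is_automorphism :: "'a set \<Rightarrow> ('a \<Rightarrow> 'a list) \<Rightarrow> bool" where
  "is_automorphism S f \<longleftrightarrow> is_morphism S f \<and> (\<forall>a\<in>S. length (f a) = 1)
     \<and> inj_on (ext_morph f) (words S)"

text \<open>Reducible: phi = psi2 o psi1 for morphisms psi1, psi2 on S^+ neither of which is an
automorphism. Two morphisms are equal iff they agree on all letters.\<close>
definition reducible :: "'a set \<Rightarrow> ('a \<Rightarrow> 'a list) \<Rightarrow> bool" where
  "reducible S f \<longleftrightarrow> (\<exists>\<psi>1 \<psi>2. is_morphism S \<psi>1 \<and> is_morphism S \<psi>2
     \<and> \<not> is_automorphism S \<psi>1 \<and> \<not> is_automorphism S \<psi>2
     \<and> (\<forall>a\<in>S. f a = ext_morph \<psi>2 (\<psi>1 a)))"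

end

theory Submission
  imports Defs
begin

lemma ext_cong:
  assumes "set w \<subseteq> S" "\<forall>a\<in>S. f a = g a"
  shows "ext_morph f w = ext_morph g w"
  using assms unfolding ext_morph_def by (induction w) auto

lemma lift_morph:
  assumes "S1 \<subseteq> S2" "is_morphism S1 \<psi>"
  shows "is_morphism S2 (\<lambda>a. if a \<in> S1 then \<psi> a else [a])"
  using assms unfolding is_morphism_def words_def by auto

lemma lift_nonauto:
  assumes "S1 \<subseteq> S2" "is_morphism S1 \<psi>" "\<not> is_automorphism S1 \<psi>"
  shows "\<not> is_automorphism S2 (\<lambda>a. if a \<in> S1 then \<psi> a else [a])"
proof
  let ?g = "\<lambda>a. if a \<in> S1 then \<psi> a else [a]"
  assume A: "is_automorphism S2 ?g"
  have L: "\<forall>a\<in>S1. length (\<psi> a) = 1"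
  proof
    fix a assume "a \<in> S1"
    then have a2: "a \<in> S2" using assms(1) by auto
    have "\<forall>x\<in>S2. length (?g x) = 1" using A unfolding is_automorphism_def by blast
    then have "length (?g a) = 1" using a2 by blast
    then show "length (\<psi> a) = 1" using \<open>a \<in> S1\<close> by simp
  qed
  have I: "inj_on (ext_morph ?g) (words S1)"
  proof (rule inj_on_subset)
    show "inj_on (ext_morph ?g) (words S2)" using A unfolding is_automorphism_def by blast
    show "words S1 \<subseteq> words S2" using assms(1) unfolding words_def by auto
  qed
  have E: "\<forall>w\<in>words S1. ext_morph ?g w = ext_morph \<psi> w"
    by (auto intro!: ext_cong simp: words_def)
  have "inj_on (ext_morph \<psi>) (words S1)"
    using I E by (simp add: inj_on_def)
  then have "is_automorphism S1 \<psi>" using assms(2) L unfolding is_automorphism_def by blast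
  then show False using assms(3) by blast
qed

theorem proposition10:
  fixes S1 S2 :: "'a set" and \<phi>1 :: "'a \<Rightarrow> 'a list"
  assumes "finite S2" and "S1 \<noteq> {}" and "S1 \<subset> S2"
    and "is_morphism S1 \<phi>1" and "reducible S1 \<phi>1" and "parikh_positive S1 \<phi>1"
  shows "\<exists>\<phi>2. is_morphism S2 \<phi>2 \<and> reducible S2 \<phi>2 \<and> parikh_positive S2 \<phi>2
           \<and> (\<forall>a\<in>S1. \<phi>2 a = \<phi>1 a) \<and> (\<forall>a\<in>S2 - S1. \<phi>2 a = [a])"
proof -
  have sub: "S1 \<subseteq> S2" using assms(3) by auto
  obtain \<psi>1 \<psi>2 where p: "is_morphism S1 \<psi>1" "is_morphism S1 \<psi>2"
     "\<not> is_automorphism S1 \<psi>1" "\<not> is_automorphism S1 \<psi>2"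
     "\<forall>a\<in>S1. \<phi>1 a = ext_morph \<psi>2 (\<psi>1 a)"
    using assms(5) unfolding reducible_def by blast
  define g1 where "g1 = (\<lambda>a. if a \<in> S1 then \<psi>1 a else [a])"
  define g2 where "g2 = (\<lambda>a. if a \<in> S1 then \<psi>2 a else [a])"
  define f where "f = (\<lambda>a. if a \<in> S1 then \<phi>1 a else [a])"
  have "is_morphism S2 f" using lift_morph[OF sub assms(4)] unfolding f_def .
  moreover have "reducible S2 f"
    unfolding reducible_def
  proof (intro exI conjI)
    show "is_morphism S2 g1" "is_morphism S2 g2"
      using lift_morph[OF sub p(1)] lift_morph[OF sub p(2)] unfolding g1_def g2_def by auto
    show "\<not> is_automorphism S2 g1" "\<not> is_automorphism S2 g2"
      using lift_nonauto[OF sub p(1,3)] lift_nonauto[OF sub p(2,4)] unfolding g1_def g2_def by auto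
    show "\<forall>a\<in>S2. f a = ext_morph g2 (g1 a)"
    proof
      fix a assume "a \<in> S2"
      show "f a = ext_morph g2 (g1 a)"
      proof (cases "a \<in> S1")
        case True
        have "set (\<psi>1 a) \<subseteq> S1" using p(1) True unfolding is_morphism_def words_def by auto
        then have "ext_morph g2 (\<psi>1 a) = ext_morph \<psi>2 (\<psi>1 a)"
          by (intro ext_cong) (auto simp: g2_def)
        then show ?thesis using True p(5) by (simp add: f_def g1_def)
      next
        case False
        then show ?thesis by (simp add: f_def g1_def g2_def ext_morph_def)
      qed
    qed
  qed
  moreover have "parikh_positive S2 f"
    using assms(6) sub unfolding parikh_positive_def f_def by fastforce
  ultimately show ?thesis by (intro exI[of _ f]) (auto simp: f_def)
qed

end
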